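(* Let $F,F',G,G'$ be graphs, all with the same vertex set contained in $\{v_1,\ldots,v_n\}$, such that $F\cong F'$, $|E(G)|=|E(G')|$ and $E(F)\cap E(G)=E(F')\cap E(G')=\emptyset$. Then $$\pi\big(F\cup G,\mathfrak C(F,G)\big)=\pi\big(F'\cup G',\mathfrak C(F',G')\big),$$ where $\mathfrak C(F,G)$ denotes the set of all clique covers $\mathcal C$ of $F\cup G$ with $E(G)\subseteq\mathcal C\subseteq\mathcal P(F\cup G)\setminus E(F)$ (edges being regarded as $2$-element vertex sets), and similarly for $\mathfrak C(F',G')$.
   Context: Random intersection graph $\mathcal G(n,m,p)$: vertices $v_1,\ldots,v_n$, attributes $a_1,\ldots,a_m$; each vertex chooses each attribute independently with probability $p$; two vertices are adjacent iff they chose a common attribute. For a graph $H$, $\mathcal P(H)$ is the family of subsets of $V(H)$ containing both ends of at least one edge of $H$. $\mathcal C\subseteq\mathcal P(H)$ is a clique cover of $H$ if every edge of $H$ is contained in some $C\in\mathcal C$. An attribute builds $C\subseteq V(H)$ if all vertices of $C$ and no vertex of $V(H)\setminus C$ chose it. $H$ is given by the clique cover $\mathcal C$ if every $C\in\mathcal C$ is built by some attribute and no $C\in\mathcal P(H)\setminus\mathcal C$ is built by any attribute; $\pi(H,\mathcal C)$ is its probability, and for a family $\mathfrak C$ of clique covers $\pi(H,\mathfrak C)=\sum_{\mathcal C\in\mathfrak C}\pi(H,\mathcal C)$. $F\cup G$ is the graph with vertex set $V(F)\cup V(G)$ and edge set $E(F)\cup E(G)$. *)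

theory Defs
  imports "HOL-Probability.Probability"
begin

(* A graph is a pair (V, E): V a vertex set, E a set of 2-element subsets of V.
   Vertices v_1..v_n are the naturals 1..n, attributes a_1..a_m are 1..m. *)
type_synonym graph = "nat set \<times> nat set set"

definition verts :: "graph \<Rightarrow> nat set" where "verts H = fst H"
definition edges :: "graph \<Rightarrow> nat set set" where "edges H = snd H"

definition is_graph :: "nat \<Rightarrow> graph \<Rightarrow> bool" where
  "is_graph n H \<longleftrightarrow> verts H \<subseteq> {1..n} \<and>
     (\<forall>e\<in>edges H. e \<subseteq> verts H \<and> card e = 2)"

definition graph_union :: "graph \<Rightarrow> graph \<Rightarrow> graph" where
  "graph_union F G = (verts F \<union> verts G, edges F \<union> edges G)"

definition graph_iso :: "graph \<Rightarrow> graph \<Rightarrow> bool" where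
  "graph_iso F F' \<longleftrightarrow> (\<exists>f. bij_betw f (verts F) (verts F') \<and>
     (\<forall>e. e \<subseteq> verts F \<longrightarrow> (e \<in> edges F \<longleftrightarrow> f ` e \<in> edges F')))"

definition PH :: "graph \<Rightarrow> nat set set" where
  "PH H = {S. S \<subseteq> verts H \<and> (\<exists>e\<in>edges H. e \<subseteq> S)}"

definition clique_cover :: "graph \<Rightarrow> nat set set \<Rightarrow> bool" where
  "clique_cover H \<C> \<longleftrightarrow> \<C> \<subseteq> PH H \<and> (\<forall>e\<in>edges H. \<exists>C\<in>\<C>. e \<subseteq> C)"

(* The random choices: R (v, a) = True iff vertex v chose attribute a.
   Each pair (v,a), v \<in> {1..n}, a \<in> {1..m}, independently with probability p. *)
definition RIG :: "nat \<Rightarrow> nat \<Rightarrow> real \<Rightarrow> (nat \<times> nat \<Rightarrow> bool) pmf" where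
  "RIG n m p = Pi_pmf ({1..n} \<times> {1..m}) False (\<lambda>_. bernoulli_pmf p)"

definition builds :: "(nat \<times> nat \<Rightarrow> bool) \<Rightarrow> graph \<Rightarrow> nat \<Rightarrow> nat set \<Rightarrow> bool" where
  "builds R H a C \<longleftrightarrow> (\<forall>v\<in>C. R (v, a)) \<and> (\<forall>v\<in>verts H - C. \<not> R (v, a))"

definition given_by :: "nat \<Rightarrow> (nat \<times> nat \<Rightarrow> bool) \<Rightarrow> graph \<Rightarrow> nat set set \<Rightarrow> bool" where
  "given_by m R H \<C> \<longleftrightarrow>
     (\<forall>C\<in>\<C>. \<exists>a\<in>{1..m}. builds R H a C) \<and>
     (\<forall>C\<in>PH H - \<C>. \<not> (\<exists>a\<in>{1..m}. builds R H a C))"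

definition pi_cc :: "nat \<Rightarrow> nat \<Rightarrow> real \<Rightarrow> graph \<Rightarrow> nat set set \<Rightarrow> real" where
  "pi_cc n m p H \<C> = measure_pmf.prob (RIG n m p) {R. given_by m R H \<C>}"

definition pi_fam :: "nat \<Rightarrow> nat \<Rightarrow> real \<Rightarrow> graph \<Rightarrow> nat set set set \<Rightarrow> real" where
  "pi_fam n m p H \<CC> = (\<Sum>\<C>\<in>\<CC>. pi_cc n m p H \<C>)"

definition CFG :: "graph \<Rightarrow> graph \<Rightarrow> nat set set set" where
  "CFG F G = {\<C>. clique_cover (graph_union F G) \<C> \<and> edges G \<subseteq> \<C> \<and>
                 \<C> \<subseteq> PH (graph_union F G) - edges F}"

end

theory Submission
  imports Defs
begin


definition col :: "nat set \<Rightarrow> (nat \<times> nat \<Rightarrow> bool) \<Rightarrow> nat \<Rightarrow> nat set" where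
  "col V R a = {v\<in>V. R (v, a)}"

definition Ev :: "nat \<Rightarrow> nat set \<Rightarrow> nat set set \<Rightarrow> nat set set \<Rightarrow> (nat \<times> nat \<Rightarrow> bool) \<Rightarrow> bool" where
  "Ev m V EF EG R \<longleftrightarrow> (\<forall>e\<in>EG. \<exists>a\<in>{1..m}. col V R a = e) \<and>
     (\<forall>e\<in>EF. \<forall>a\<in>{1..m}. col V R a \<noteq> e) \<and> (\<forall>e\<in>EF. \<exists>a\<in>{1..m}. e \<subseteq> col V R a)"

lemma builds_col: "S \<subseteq> verts H \<Longrightarrow> builds R H a S \<longleftrightarrow> col (verts H) R a = S"
  unfolding builds_def col_def by auto

lemma union_event:
  assumes "is_graph n F" "is_graph n G" "verts G = verts F"
    and "edges F \<inter> edges G = {}"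
  shows "pi_fam n m p (graph_union F G) (CFG F G) =
         measure_pmf.prob (RIG n m p) {R. Ev m (verts F) (edges F) (edges G) R}"
proof -
  define V where "V = verts F"
  define H where "H = graph_union F G"
  have vH: "verts H = V" "edges H = edges F \<union> edges G"
    using assms unfolding H_def V_def graph_union_def verts_def edges_def by auto
  have finV: "finite V" using assms(1) unfolding is_graph_def V_def
    using finite_subset by blast
  have eF: "\<And>e. e \<in> edges F \<Longrightarrow> e \<subseteq> V \<and> card e = 2"
    using assms(1) unfolding is_graph_def V_def by auto
  have eG: "\<And>e. e \<in> edges G \<Longrightarrow> e \<subseteq> V \<and> card e = 2"
    using assms(2,3) unfolding is_graph_def V_def by auto
  have PHsub: "PH H \<subseteq> Pow V" unfolding PH_def vH by auto
  have finCFG: "finite (CFG F G)"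
  proof (rule finite_subset)
    show "CFG F G \<subseteq> Pow (Pow V)" using PHsub unfolding CFG_def H_def[symmetric] by auto
    show "finite (Pow (Pow V))" using finV by simp
  qed
  have disj: "disjoint_family_on (\<lambda>C. {R. given_by m R H C}) (CFG F G)"
  proof (unfold disjoint_family_on_def, intro ballI impI)
    fix C1 C2 assume C: "C1 \<in> CFG F G" "C2 \<in> CFG F G" "C1 \<noteq> C2"
    have s: "C1 \<subseteq> PH H" "C2 \<subseteq> PH H" using C unfolding CFG_def H_def by auto
    show "{R. given_by m R H C1} \<inter> {R. given_by m R H C2} = {}"
    proof (rule ccontr)
      assume "{R. given_by m R H C1} \<inter> {R. given_by m R H C2} \<noteq> {}"
      then obtain R where g: "given_by m R H C1" "given_by m R H C2" by auto
      have "C1 \<subseteq> C2" using g s unfolding given_by_def by blast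
      moreover have "C2 \<subseteq> C1" using g s unfolding given_by_def by blast
      ultimately show False using C by auto
    qed
  qed
  have U: "(\<Union>C\<in>CFG F G. {R. given_by m R H C}) = {R. Ev m V (edges F) (edges G) R}"
  proof (intro set_eqI iffI)
    fix R assume "R \<in> (\<Union>C\<in>CFG F G. {R. given_by m R H C})"
    then obtain C where C: "C \<in> CFG F G" "given_by m R H C" by auto
    have cc: "C \<subseteq> PH H" "\<forall>e\<in>edges H. \<exists>S\<in>C. e \<subseteq> S" "edges G \<subseteq> C" "C \<inter> edges F = {}"
      using C(1) unfolding CFG_def clique_cover_def H_def by auto
    have bC: "\<exists>a\<in>{1..m}. col V R a = S" if S: "S \<in> C" for S
    proof -
      have "S \<subseteq> V" using S cc(1) PHsub by auto
      moreover obtain a where "a \<in> {1..m}" "builds R H a S" using C(2) S unfolding given_by_def by blast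
      ultimately show ?thesis using builds_col[of S H R a] vH by auto
    qed
    have ePH: "\<And>e. e \<in> edges H \<Longrightarrow> e \<in> PH H" unfolding PH_def using vH eF eG by auto
    have nb: "\<And>e a. e \<in> edges F \<Longrightarrow> a \<in> {1..m} \<Longrightarrow> col V R a \<noteq> e"
    proof
      fix e a assume e: "e \<in> edges F" "a \<in> {1..m}" "col V R a = e"
      have "e \<in> PH H - C" using ePH[of e] e cc(4) vH by auto
      then show False using C(2) e builds_col[of e H R a] eF[of e] vH unfolding given_by_def by auto
    qed
    show "R \<in> {R. Ev m V (edges F) (edges G) R}"
      unfolding Ev_def mem_Collect_eq
    proof (intro conjI ballI)
      fix e assume "e \<in> edges G" then show "\<exists>a\<in>{1..m}. col V R a = e" using cc(3) bC by auto
    next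
      fix e a assume "e \<in> edges F" "a \<in> {1..m}" then show "col V R a \<noteq> e" using nb by auto
    next
      fix e assume "e \<in> edges F"
      then obtain S where "S \<in> C" "e \<subseteq> S" using cc(2) vH by blast
      then show "\<exists>a\<in>{1..m}. e \<subseteq> col V R a" using bC by blast
    qed
  next
    fix R assume R: "R \<in> {R. Ev m V (edges F) (edges G) R}"
    define C where "C = {S\<in>PH H. \<exists>a\<in>{1..m}. builds R H a S}"
    have ePH: "\<And>e. e \<in> edges H \<Longrightarrow> e \<in> PH H" unfolding PH_def using vH eF eG by auto
    have colPH: "\<And>a e. e \<in> edges H \<Longrightarrow> e \<subseteq> col V R a \<Longrightarrow> col V R a \<in> PH H"
      unfolding PH_def col_def using vH by auto
    have "C \<in> CFG F G"
      unfolding CFG_def clique_cover_def H_def[symmetric]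
    proof (intro CollectI conjI)
      show "C \<subseteq> PH H" unfolding C_def by auto
      show "\<forall>e\<in>edges H. \<exists>C\<in>C. e \<subseteq> C"
      proof
        fix e assume e: "e \<in> edges H"
        show "\<exists>C\<in>C. e \<subseteq> C"
        proof (cases "e \<in> edges G")
          case True
          then obtain a where a: "a \<in> {1..m}" "col V R a = e" using R unfolding Ev_def by auto
          have "builds R H a e" using builds_col[of e H R a] eG[OF True] vH a by auto
          then have "e \<in> C" unfolding C_def using ePH[OF e] a by auto
          then show ?thesis by auto
        next
          case False
          then have "e \<in> edges F" using e vH by auto
          then obtain a where a: "a \<in> {1..m}" "e \<subseteq> col V R a" using R unfolding Ev_def by auto
          have "builds R H a (col V R a)" using builds_col[of "col V R a" H R a] vH by (auto simp: col_def)
          then have "col V R a \<in> C" unfolding C_def using colPH[OF e a(2)] a by auto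
          then show ?thesis using a by auto
        qed
      qed
      show "edges G \<subseteq> C"
      proof
        fix e assume e: "e \<in> edges G"
        then obtain a where a: "a \<in> {1..m}" "col V R a = e" using R unfolding Ev_def by auto
        have "builds R H a e" using builds_col[of e H R a] eG[OF e] vH a by auto
        then show "e \<in> C" unfolding C_def using ePH[of e] e vH a by auto
      qed
      show "C \<subseteq> PH H - edges F"
      proof
        fix S assume S: "S \<in> C"
        then obtain a where "a \<in> {1..m}" "builds R H a S" "S \<in> PH H" unfolding C_def by auto
        then show "S \<in> PH H - edges F" using R builds_col[of S H R a] PHsub vH unfolding Ev_def by auto
      qed
    qed
    moreover have "given_by m R H C" unfolding given_by_def C_def by auto
    ultimately show "R \<in> (\<Union>C\<in>CFG F G. {R. given_by m R H C})" by auto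
  qed
  have "pi_fam n m p H (CFG F G) = measure_pmf.prob (RIG n m p) (\<Union>C\<in>CFG F G. {R. given_by m R H C})"
    unfolding pi_fam_def pi_cc_def
    by (rule measure_pmf.finite_measure_finite_Union[symmetric]) (use finCFG disj in auto)
  then show ?thesis using U unfolding H_def V_def by simp
qed



lemma tau_exists:
  assumes finV: "finite V"
    and sub: "EF \<subseteq> E2" "EG \<subseteq> E2" "EF' \<subseteq> E2" "EG' \<subseteq> E2"
    and E2: "E2 = {e. e \<subseteq> V \<and> card e = 2}"
    and dj: "EF \<inter> EG = {}" "EF' \<inter> EG' = {}"
    and cd: "card EF = card EF'" "card EG = card EG'"
  shows "\<exists>\<tau>. bij_betw \<tau> E2 E2 \<and> \<tau> ` EF = EF' \<and> \<tau> ` EG = EG'"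
proof -
  have finE2: "finite E2"
  proof (rule finite_subset)
    show "E2 \<subseteq> Pow V" unfolding E2 by auto
  qed (use finV in auto)
  have fins: "finite EF" "finite EG" "finite EF'" "finite EG'"
    using sub finE2 by (meson finite_subset)+
  obtain t1 where t1: "bij_betw t1 EF EF'" using finite_same_card_bij[OF fins(1) fins(3) cd(1)] by blast
  obtain t2 where t2: "bij_betw t2 EG EG'" using finite_same_card_bij[OF fins(2) fins(4) cd(2)] by blast
  have c3: "card (E2 - (EF \<union> EG)) = card (E2 - (EF' \<union> EG'))"
    using sub fins dj cd finE2 by (simp add: card_Diff_subset card_Un_disjoint)
  obtain t3 where t3: "bij_betw t3 (E2 - (EF \<union> EG)) (E2 - (EF' \<union> EG'))"
    using finite_same_card_bij[OF finite_Diff[OF finE2] finite_Diff[OF finE2] c3] by blast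
  define t where "t e = (if e \<in> EF then t1 e else if e \<in> EG then t2 e else t3 e)" for e
  have b1: "bij_betw t EF EF'" using t1 by (rule bij_betw_cong[THEN iffD1, rotated]) (auto simp: t_def)
  have b2: "bij_betw t EG EG'" using t2 dj by (intro bij_betw_cong[THEN iffD1, OF _ t2]) (auto simp: t_def)
  have b3: "bij_betw t (E2 - (EF \<union> EG)) (E2 - (EF' \<union> EG'))"
    by (intro bij_betw_cong[THEN iffD1, OF _ t3]) (auto simp: t_def)
  have "bij_betw t (EF \<union> EG \<union> (E2 - (EF \<union> EG))) (EF' \<union> EG' \<union> (E2 - (EF' \<union> EG')))"
    by (intro bij_betw_combine b1 b2 b3) (use dj in auto)
  moreover have "EF \<union> EG \<union> (E2 - (EF \<union> EG)) = E2" "EF' \<union> EG' \<union> (E2 - (EF' \<union> EG')) = E2"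
    using sub by auto
  ultimately have "bij_betw t E2 E2" by simp
  then show ?thesis using b1 b2 unfolding bij_betw_def by blast
qed

definition Phi :: "(nat set \<Rightarrow> nat set) \<Rightarrow> (nat \<Rightarrow> nat) \<Rightarrow> nat set \<Rightarrow> nat set \<Rightarrow> nat set" where
  "Phi t f V S = (if S \<subseteq> V \<and> card S = 2 then t S else f ` S)"

lemma Phi_props:
  assumes finV: "finite V" and f: "bij_betw f V V"
    and t: "bij_betw t {e. e \<subseteq> V \<and> card e = 2} {e. e \<subseteq> V \<and> card e = 2}"
  shows "\<And>S. S \<subseteq> V \<Longrightarrow> Phi t f V S \<subseteq> V"
    and "\<And>S. S \<subseteq> V \<Longrightarrow> card (Phi t f V S) = card S"
    and "inj_on (Phi t f V) (Pow V)"
proof -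
  have injf: "inj_on f V" and fV: "f ` V = V" using f unfolding bij_betw_def by auto
  show 1: "Phi t f V S \<subseteq> V" if "S \<subseteq> V" for S
    using that t fV unfolding Phi_def bij_betw_def by auto
  show 2: "card (Phi t f V S) = card S" if "S \<subseteq> V" for S
  proof (cases "card S = 2")
    case True
    then have "t S \<in> {e. e \<subseteq> V \<and> card e = 2}" using t that unfolding bij_betw_def by auto
    then show ?thesis using True that unfolding Phi_def by auto
  next
    case False
    then show ?thesis using that injf unfolding Phi_def by (simp add: card_image inj_on_subset)
  qed
  show "inj_on (Phi t f V) (Pow V)"
  proof (rule inj_onI)
    fix S T assume S: "S \<in> Pow V" and T: "T \<in> Pow V" and eq: "Phi t f V S = Phi t f V T"
    have cST: "card S = card T" using 2[of S] 2[of T] S T eq by auto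
    show "S = T"
    proof (cases "card S = 2")
      case True
      then have "t S = t T" using eq cST S T unfolding Phi_def by auto
      then show ?thesis using t True cST S T unfolding bij_betw_def inj_on_def by auto
    next
      case False
      then have "f ` S = f ` T" using eq cST S T unfolding Phi_def by auto
      then show ?thesis using inj_on_image_eq_iff[OF injf] S T by auto
    qed
  qed
qed

definition Evc :: "nat \<Rightarrow> nat set set \<Rightarrow> nat set set \<Rightarrow> (nat \<Rightarrow> nat set) \<Rightarrow> bool" where
  "Evc m EF EG T \<longleftrightarrow> (\<forall>e\<in>EG. \<exists>a\<in>{1..m}. T a = e) \<and>
     (\<forall>e\<in>EF. \<forall>a\<in>{1..m}. T a \<noteq> e) \<and> (\<forall>e\<in>EF. \<exists>a\<in>{1..m}. e \<subseteq> T a)"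

lemma Ev_Evc: "Ev m V EF EG R = Evc m EF EG (col V R)"
  unfolding Ev_def Evc_def by simp

lemma Evc_transfer:
  assumes finV: "finite V" and f: "bij_betw f V V"
    and E2: "E2 = {e. e \<subseteq> V \<and> card e = 2}"
    and t: "bij_betw t E2 E2" and tF: "t ` EF = EF'" and tG: "t ` EG = EG'"
    and sub: "EF \<subseteq> E2" "EG \<subseteq> E2"
    and iso: "\<And>e. e \<subseteq> V \<Longrightarrow> e \<in> EF \<longleftrightarrow> f ` e \<in> EF'"
    and T: "\<And>a. T a \<subseteq> V"
  shows "Evc m EF EG T \<longleftrightarrow> Evc m EF' EG' (\<lambda>a. Phi t f V (T a))"
proof -
  let ?P = "Phi t f V"
  note PP = Phi_props[OF finV f t[unfolded E2]]
  have injf: "inj_on f V" and fV: "f ` V = V" using f unfolding bij_betw_def by auto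
  have key: "?P (T a) = t e \<longleftrightarrow> T a = e" if e: "e \<in> E2" for e a
  proof -
    have "?P e = t e" using e unfolding E2 Phi_def by auto
    moreover have "e \<in> Pow V" "T a \<in> Pow V" using e T unfolding E2 by auto
    ultimately show ?thesis using PP(3) unfolding inj_on_def by metis
  qed
  have c1: "(\<forall>e\<in>EG. \<exists>a\<in>{1..m}. T a = e) \<longleftrightarrow> (\<forall>e\<in>EG'. \<exists>a\<in>{1..m}. ?P (T a) = e)"
  proof -
    have "\<forall>e\<in>EG. ((\<exists>a\<in>{1..m}. T a = e) \<longleftrightarrow> (\<exists>a\<in>{1..m}. ?P (T a) = t e))"
      using key sub by blast
    then show ?thesis unfolding tG[symmetric] by auto
  qed
  have c2: "(\<forall>e\<in>EF. \<forall>a\<in>{1..m}. T a \<noteq> e) \<longleftrightarrow> (\<forall>e\<in>EF'. \<forall>a\<in>{1..m}. ?P (T a) \<noteq> e)"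
  proof -
    have "\<forall>e\<in>EF. ((\<forall>a\<in>{1..m}. T a \<noteq> e) \<longleftrightarrow> (\<forall>a\<in>{1..m}. ?P (T a) \<noteq> t e))"
      using key sub by blast
    then show ?thesis unfolding tF[symmetric] by auto
  qed
  have EF2: "\<And>e. e \<in> EF \<Longrightarrow> e \<subseteq> V \<and> card e = 2" using sub E2 by auto
  have EF'2: "\<And>e. e \<in> EF' \<Longrightarrow> e \<subseteq> V \<and> card e = 2" 
  proof -
    fix e assume "e \<in> EF'"
    then obtain e0 where "e0 \<in> EF" "e = t e0" using tF by auto
    then have "e \<in> t ` E2" using sub by auto
    then have "e \<in> E2" using t unfolding bij_betw_def by auto
    then show "e \<subseteq> V \<and> card e = 2" using E2 by auto
  qed
  have c3: "(\<forall>e\<in>EF. \<exists>a\<in>{1..m}. e \<subseteq> T a) \<longleftrightarrow> (\<forall>e\<in>EF'. \<exists>a\<in>{1..m}. e \<subseteq> ?P (T a))"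
    if n2: "\<forall>e\<in>EF. \<forall>a\<in>{1..m}. T a \<noteq> e" "\<forall>e\<in>EF'. \<forall>a\<in>{1..m}. ?P (T a) \<noteq> e"
  proof
    assume L: "\<forall>e\<in>EF. \<exists>a\<in>{1..m}. e \<subseteq> T a"
    show "\<forall>e\<in>EF'. \<exists>a\<in>{1..m}. e \<subseteq> ?P (T a)"
    proof
      fix e' assume e': "e' \<in> EF'"
      have "e' \<subseteq> f ` V" using EF'2[OF e'] fV by auto
      then obtain e where e: "e \<subseteq> V" "e' = f ` e" by (auto simp: subset_image_iff)
      then have eF: "e \<in> EF" using iso e' by auto
      then obtain a where a: "a \<in> {1..m}" "e \<subseteq> T a" using L by auto
      have "T a \<noteq> e" using n2 eF a by auto
      moreover have "finite (T a)" using T finV finite_subset by blast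
      ultimately have "card (T a) \<noteq> 2" using a EF2[OF eF] card_subset_eq by metis
      then have "?P (T a) = f ` T a" unfolding Phi_def by auto
      then have "e' \<subseteq> ?P (T a)" using a e by auto
      then show "\<exists>a\<in>{1..m}. e' \<subseteq> ?P (T a)" using a(1) by blast
    qed
  next
    assume R: "\<forall>e\<in>EF'. \<exists>a\<in>{1..m}. e \<subseteq> ?P (T a)"
    show "\<forall>e\<in>EF. \<exists>a\<in>{1..m}. e \<subseteq> T a"
    proof
      fix e assume eF: "e \<in> EF"
      have e': "f ` e \<in> EF'" using iso eF EF2 by auto
      then obtain a where a: "a \<in> {1..m}" "f ` e \<subseteq> ?P (T a)" using R by auto
      have "?P (T a) \<noteq> f ` e" using n2 e' a by auto
      moreover have "finite (?P (T a))" using PP(1)[OF T] finV finite_subset by blast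
      moreover have "card (f ` e) = 2" using e' EF'2 by auto
      ultimately have "card (?P (T a)) \<noteq> 2" using a card_subset_eq by metis
      then have "card (T a) \<noteq> 2" using PP(2)[OF T] by simp
      then have "?P (T a) = f ` T a" unfolding Phi_def by auto
      then have "f ` e \<subseteq> f ` T a" using a by auto
      then show "\<exists>a\<in>{1..m}. e \<subseteq> T a" using a inj_on_image_subset_iff[OF injf] EF2[OF eF] T by blast
    qed
  qed
  show ?thesis
  proof (cases "\<forall>e\<in>EF. \<forall>a\<in>{1..m}. T a \<noteq> e")
    case True
    have B: "\<forall>e\<in>EF'. \<forall>a\<in>{1..m}. ?P (T a) \<noteq> e" by (rule iffD1[OF c2 True])
    show ?thesis unfolding Evc_def using c3[OF True B] c1 c2 by argo
  next
    case False
    then have B: "\<not> (\<forall>e\<in>EF'. \<forall>a\<in>{1..m}. ?P (T a) \<noteq> e)" using c2 by blast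
    show ?thesis unfolding Evc_def using False B by argo
  qed
qed



definition Psi :: "(nat set \<Rightarrow> nat set) \<Rightarrow> (nat \<Rightarrow> nat) \<Rightarrow> nat set \<Rightarrow> (nat \<times> nat \<Rightarrow> bool) \<Rightarrow> (nat \<times> nat \<Rightarrow> bool)" where
  "Psi t f V R = (\<lambda>(v,a). if v \<in> V then v \<in> Phi t f V (col V R a) else R (v,a))"

lemma prod_if_card:
  fixes p q :: real
  assumes "finite V" "T \<subseteq> V"
  shows "(\<Prod>v\<in>V. if v \<in> T then p else q) = p ^ card T * q ^ (card V - card T)"
proof -
  have "(\<Prod>v\<in>V. if v \<in> T then p else q) = (\<Prod>v\<in>V \<inter> {v. v \<in> T}. p) * (\<Prod>v\<in>V \<inter> - {v. v \<in> T}. q)"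
    by (rule prod.If_cases) (use assms in auto)
  also have "V \<inter> {v. v \<in> T} = T" using assms by auto
  also have "V \<inter> - {v. v \<in> T} = V - T" by auto
  finally have "(\<Prod>v\<in>V. if v \<in> T then p else q) = p ^ card T * q ^ card (V - T)" by simp
  moreover have "card (V - T) = card V - card T" using assms by (simp add: card_Diff_subset finite_subset)
  ultimately show ?thesis by simp
qed

lemma prod_decomp:
  fixes p :: real
  assumes V: "V \<subseteq> {1..n}"
  shows "(\<Prod>x\<in>{1..n} \<times> {1..m}. (if R x then p else 1 - p)) =
    (\<Prod>a\<in>{1..m}. (\<Prod>v\<in>{1..n} - V. (if R (v,a) then p else 1 - p)) *
        (p ^ card (col V R a) * (1 - p) ^ (card V - card (col V R a))))"
proof -
  have finV: "finite V" using V finite_subset by blast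
  have "(\<Prod>x\<in>{1..n} \<times> {1..m}. (if R x then p else 1 - p)) =
        (\<Prod>v\<in>{1..n}. \<Prod>a\<in>{1..m}. (if R (v,a) then p else 1 - p))"
    by (subst prod.cartesian_product) (simp add: case_prod_beta)
  also have "\<dots> = (\<Prod>a\<in>{1..m}. \<Prod>v\<in>{1..n}. (if R (v,a) then p else 1 - p))"
    by (rule prod.swap)
  also have "\<dots> = (\<Prod>a\<in>{1..m}. (\<Prod>v\<in>{1..n} - V. (if R (v,a) then p else 1 - p)) *
        (p ^ card (col V R a) * (1 - p) ^ (card V - card (col V R a))))"
  proof (rule prod.cong[OF refl])
    fix a
    have "(\<Prod>v\<in>{1..n}. (if R (v,a) then p else 1 - p)) =
       (\<Prod>v\<in>{1..n} - V. (if R (v,a) then p else 1 - p)) * (\<Prod>v\<in>V. (if R (v,a) then p else 1 - p))"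
      by (rule prod.subset_diff) (use V in auto)
    also have "(\<Prod>v\<in>V. (if R (v,a) then p else 1 - p)) = (\<Prod>v\<in>V. (if v \<in> col V R a then p else 1 - p))"
      by (rule prod.cong) (auto simp: col_def)
    also have "\<dots> = p ^ card (col V R a) * (1 - p) ^ (card V - card (col V R a))"
      by (rule prod_if_card[OF finV]) (auto simp: col_def)
    finally show "(\<Prod>v\<in>{1..n}. (if R (v,a) then p else 1 - p)) =
       (\<Prod>v\<in>{1..n} - V. (if R (v,a) then p else 1 - p)) *
        (p ^ card (col V R a) * (1 - p) ^ (card V - card (col V R a)))" .
  qed
  finally show ?thesis .
qed

lemma prob_inv:
  fixes p :: real
  assumes p: "0 \<le> p" "p \<le> 1" and V: "V \<subseteq> {1..n}" and f: "bij_betw f V V"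
    and t: "bij_betw t {e. e \<subseteq> V \<and> card e = 2} {e. e \<subseteq> V \<and> card e = 2}"
    and A: "\<And>R. R \<in> A1 \<longleftrightarrow> Psi t f V R \<in> A2"
  shows "measure_pmf.prob (RIG n m p) A1 = measure_pmf.prob (RIG n m p) A2"
proof -
  define M where "M = RIG n m p"
  define D where "D = {1..n} \<times> {1..m}"
  define Supp where "Supp = {R :: nat \<times> nat \<Rightarrow> bool. \<forall>x. x \<notin> D \<longrightarrow> R x = False}"
  let ?Psi = "Psi t f V"
  have finV: "finite V" using V finite_subset by blast
  note PP = Phi_props[OF finV f t]
  have colsub: "\<And>R a. col V R a \<subseteq> V" unfolding col_def by auto
  have colPsi: "col V (?Psi R) a = Phi t f V (col V R a)" for R a
    using PP(1)[OF colsub[of R a]] unfolding col_def Psi_def by auto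
  have finD: "finite D" unfolding D_def by simp
  have setM: "set_pmf M \<subseteq> Supp" unfolding M_def RIG_def Supp_def D_def
    by (rule set_Pi_pmf_subset) simp
  have SuppI: "Supp = (\<lambda>S x. x \<in> S) ` Pow D"
  proof (intro set_eqI iffI)
    fix R assume "R \<in> Supp"
    then have "R = (\<lambda>x. x \<in> {x\<in>D. R x})" "{x\<in>D. R x} \<in> Pow D" unfolding Supp_def by (auto intro!: ext)
    then show "R \<in> (\<lambda>S x. x \<in> S) ` Pow D" by blast
  qed (auto simp: Supp_def)
  have finS: "finite Supp" unfolding SuppI using finD by simp
  have probS: "measure_pmf.prob M B = sum (pmf M) (B \<inter> Supp)" for B
  proof -
    have "measure_pmf.prob M B = measure_pmf.prob M (B \<inter> set_pmf M)" by (rule measure_Int_set_pmf[symmetric])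
    also have "B \<inter> set_pmf M = (B \<inter> Supp) \<inter> set_pmf M" using setM by auto
    also have "measure_pmf.prob M \<dots> = measure_pmf.prob M (B \<inter> Supp)" by (rule measure_Int_set_pmf)
    also have "\<dots> = sum (pmf M) (B \<inter> Supp)" by (rule measure_measure_pmf_finite) (use finS in auto)
    finally show ?thesis .
  qed
  have pmfM: "pmf M R = (\<Prod>x\<in>D. (if R x then p else 1 - p))" if "R \<in> Supp" for R
    using that p unfolding M_def RIG_def Supp_def by (subst pmf_Pi) (auto simp: D_def intro!: prod.cong)
  have PsiS: "?Psi R \<in> Supp" if R: "R \<in> Supp" for R
    unfolding Supp_def mem_Collect_eq
  proof (intro allI impI)
    fix x assume x: "x \<notin> D"
    obtain v a where va: "x = (v,a)" by (cases x)
    show "?Psi R x = False"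
    proof (cases "v \<in> V")
      case True
      then have "a \<notin> {1..m}" using x va V unfolding D_def by auto
      then have "col V R a = {}" using R V unfolding Supp_def D_def col_def by auto
      then have "Phi t f V (col V R a) = {}" unfolding Phi_def by simp
      then show ?thesis using True va unfolding Psi_def by simp
    next
      case False
      then show ?thesis using R x va unfolding Psi_def Supp_def by auto
    qed
  qed
  have injPsi: "inj_on ?Psi Supp"
  proof (rule inj_onI)
    fix R1 R2 assume eq: "?Psi R1 = ?Psi R2"
    show "R1 = R2"
    proof
      fix x :: "nat \<times> nat"
      obtain v a where va: "x = (v,a)" by (cases x)
      show "R1 x = R2 x"
      proof (cases "v \<in> V")
        case True
        have "Phi t f V (col V R1 a) = Phi t f V (col V R2 a)" using colPsi[of R1 a] colPsi[of R2 a] eq by simp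
        then have "col V R1 a = col V R2 a" using PP(3) colsub unfolding inj_on_def by blast
        then show ?thesis using True va unfolding col_def by blast
      next
        case False
        then show ?thesis using eq va unfolding Psi_def by (metis (mono_tags, lifting) case_prod_conv)
      qed
    qed
  qed
  have imgS: "?Psi ` Supp = Supp" by (rule endo_inj_surj[OF finS _ injPsi]) (use PsiS in blast)
  have bij: "bij_betw ?Psi (A1 \<inter> Supp) (A2 \<inter> Supp)"
    unfolding bij_betw_def
  proof (intro conjI)
    show "inj_on ?Psi (A1 \<inter> Supp)" using injPsi by (rule inj_on_subset) simp
  next
    show "?Psi ` (A1 \<inter> Supp) = A2 \<inter> Supp"
    proof (intro set_eqI iffI)
      fix y assume "y \<in> ?Psi ` (A1 \<inter> Supp)"
      then obtain x where x: "x \<in> A1" "x \<in> Supp" "y = ?Psi x" by blast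
      then have "?Psi x \<in> A2" using A[of x] by simp
      then show "y \<in> A2 \<inter> Supp" using x PsiS[OF x(2)] by simp
    next
      fix y assume y: "y \<in> A2 \<inter> Supp"
      then have "y \<in> ?Psi ` Supp" using imgS by simp
      then obtain x where x: "x \<in> Supp" "y = ?Psi x" by blast
      then have "x \<in> A1" using A[of x] y by simp
      then show "y \<in> ?Psi ` (A1 \<inter> Supp)" using x by blast
    qed
  qed
  have pmfPsi: "pmf M (?Psi R) = pmf M R" if R: "R \<in> Supp" for R
  proof -
    have "pmf M (?Psi R) = (\<Prod>x\<in>D. (if ?Psi R x then p else 1 - p))" using pmfM[OF PsiS[OF R]] .
    also have "\<dots> = (\<Prod>a\<in>{1..m}. (\<Prod>v\<in>{1..n} - V. (if ?Psi R (v,a) then p else 1 - p)) *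
        (p ^ card (col V (?Psi R) a) * (1 - p) ^ (card V - card (col V (?Psi R) a))))"
      unfolding D_def by (rule prod_decomp[OF V])
    also have "\<dots> = (\<Prod>a\<in>{1..m}. (\<Prod>v\<in>{1..n} - V. (if R (v,a) then p else 1 - p)) *
        (p ^ card (col V R a) * (1 - p) ^ (card V - card (col V R a))))"
    proof (rule prod.cong[OF refl])
      fix a
      have "card (col V (?Psi R) a) = card (col V R a)" using colPsi PP(2)[OF colsub] by simp
      moreover have "(\<Prod>v\<in>{1..n} - V. (if ?Psi R (v,a) then p else 1 - p)) = (\<Prod>v\<in>{1..n} - V. (if R (v,a) then p else 1 - p))"
        by (rule prod.cong) (auto simp: Psi_def)
      ultimately show "(\<Prod>v\<in>{1..n} - V. (if ?Psi R (v,a) then p else 1 - p)) *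
        (p ^ card (col V (?Psi R) a) * (1 - p) ^ (card V - card (col V (?Psi R) a))) =
        (\<Prod>v\<in>{1..n} - V. (if R (v,a) then p else 1 - p)) *
        (p ^ card (col V R a) * (1 - p) ^ (card V - card (col V R a)))" by simp
    qed
    also have "\<dots> = (\<Prod>x\<in>D. (if R x then p else 1 - p))"
      unfolding D_def by (rule prod_decomp[OF V, symmetric])
    also have "\<dots> = pmf M R" using pmfM R by simp
    finally show ?thesis .
  qed
  have "sum (pmf M) (A1 \<inter> Supp) = sum (\<lambda>R. pmf M (?Psi R)) (A1 \<inter> Supp)"
    using pmfPsi by (intro sum.cong) auto
  also have "\<dots> = sum (pmf M) (A2 \<inter> Supp)" by (rule sum.reindex_bij_betw[OF bij])
  finally show ?thesis using probS unfolding M_def by simp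
qed



theorem corollary5p3:
  fixes n m :: nat and p :: real and F F' G G' :: graph
  assumes "0 \<le> p" "p \<le> 1"
    and "is_graph n F" "is_graph n F'" "is_graph n G" "is_graph n G'"
    and "verts F' = verts F" "verts G = verts F" "verts G' = verts F"
    and "graph_iso F F'"
    and "card (edges G) = card (edges G')"
    and "edges F \<inter> edges G = {}" "edges F' \<inter> edges G' = {}"
  shows "pi_fam n m p (graph_union F G) (CFG F G) =
         pi_fam n m p (graph_union F' G') (CFG F' G')"
proof -
  define V where "V = verts F"
  define E2 where "E2 = {e. e \<subseteq> V \<and> card e = 2}"
  have L: "pi_fam n m p (graph_union F G) (CFG F G) =
         measure_pmf.prob (RIG n m p) {R. Ev m V (edges F) (edges G) R}"
    using union_event[OF assms(3) assms(5) assms(8) assms(12)] unfolding V_def .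
  have R: "pi_fam n m p (graph_union F' G') (CFG F' G') =
         measure_pmf.prob (RIG n m p) {R. Ev m V (edges F') (edges G') R}"
    using union_event[OF assms(4) assms(6) _ assms(13)] assms(7,9) unfolding V_def by simp
  have Vn: "V \<subseteq> {1..n}" using assms(3) unfolding is_graph_def V_def by auto
  have finV: "finite V" using Vn finite_subset by blast
  obtain f where f: "bij_betw f V V" and iso: "\<And>e. e \<subseteq> V \<Longrightarrow> e \<in> edges F \<longleftrightarrow> f ` e \<in> edges F'"
    using assms(10) assms(7) unfolding graph_iso_def V_def by auto
  have injf: "inj_on f V" and fV: "f ` V = V" using f unfolding bij_betw_def by auto
  have sF: "edges F \<subseteq> E2" using assms(3) unfolding is_graph_def E2_def V_def by auto
  have sF': "edges F' \<subseteq> E2" using assms(4,7) unfolding is_graph_def E2_def V_def by auto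
  have sG: "edges G \<subseteq> E2" using assms(5,8) unfolding is_graph_def E2_def V_def by auto
  have sG': "edges G' \<subseteq> E2" using assms(6,9) unfolding is_graph_def E2_def V_def by auto
  have img: "(\<lambda>e. f ` e) ` edges F = edges F'"
  proof (intro set_eqI iffI)
    fix e' assume "e' \<in> (\<lambda>e. f ` e) ` edges F"
    then obtain e where "e \<in> edges F" "e' = f ` e" by blast
    then show "e' \<in> edges F'" using iso sF unfolding E2_def by blast
  next
    fix e' assume e': "e' \<in> edges F'"
    then have "e' \<subseteq> f ` V" using sF' fV unfolding E2_def by auto
    then obtain e where e: "e \<subseteq> V" "e' = f ` e" by (auto simp: subset_image_iff)
    then have "e \<in> edges F" using iso e' by auto
    then show "e' \<in> (\<lambda>e. f ` e) ` edges F" using e by blast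
  qed
  have injimg: "inj_on (\<lambda>e. f ` e) (edges F)"
  proof (rule inj_onI)
    fix x y assume "x \<in> edges F" "y \<in> edges F" "f ` x = f ` y"
    then show "x = y" using inj_on_image_eq_iff[OF injf] sF unfolding E2_def by blast
  qed
  have cF: "card (edges F) = card (edges F')"
    using card_image[OF injimg] img by simp
  obtain t where t: "bij_betw t E2 E2" and tF: "t ` edges F = edges F'" and tG: "t ` edges G = edges G'"
    using tau_exists[OF finV sF sG sF' sG' E2_def assms(12) assms(13) cF assms(11)] by blast
  note PP = Phi_props[OF finV f t[unfolded E2_def]]
  have colPsi: "col V (Psi t f V R) = (\<lambda>a. Phi t f V (col V R a))" for R
  proof
    fix a
    have "col V R a \<subseteq> V" unfolding col_def by auto
    then have "Phi t f V (col V R a) \<subseteq> V" by (rule PP(1))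
    then show "col V (Psi t f V R) a = Phi t f V (col V R a)"
      unfolding Psi_def by (subst (1) col_def) auto
  qed
  have A: "R \<in> {R. Ev m V (edges F) (edges G) R} \<longleftrightarrow> Psi t f V R \<in> {R. Ev m V (edges F') (edges G') R}" for R
  proof -
    have "Ev m V (edges F) (edges G) R \<longleftrightarrow> Evc m (edges F) (edges G) (col V R)" by (rule Ev_Evc)
    also have "\<dots> \<longleftrightarrow> Evc m (edges F') (edges G') (\<lambda>a. Phi t f V (col V R a))"
      by (rule Evc_transfer[OF finV f E2_def t tF tG sF sG iso]) (auto simp: col_def)
    also have "\<dots> \<longleftrightarrow> Ev m V (edges F') (edges G') (Psi t f V R)" using Ev_Evc colPsi by simp
    finally show ?thesis by simp
  qed
  have "measure_pmf.prob (RIG n m p) {R. Ev m V (edges F) (edges G) R} =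
        measure_pmf.prob (RIG n m p) {R. Ev m V (edges F') (edges G') R}"
    by (rule prob_inv[OF assms(1,2) Vn f t[unfolded E2_def] A])
  then show ?thesis using L R by simp
qed

end
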